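(* Let $f:\mathbb{R}^2\to\mathbb{R}^2$ be $f(x,y)=(2x,\tfrac{1}{2}y)$ and let $g:\mathbb{R}^2\to\mathbb{R}^2$ be a homeomorphism topologically conjugate to $f$ (i.e. $g=h\circ f\circ h^{-1}$ for some homeomorphism $h$ of $\mathbb{R}^2$). Then $g$ does not satisfy the topological shadowing property.
   Context: Let $(X,d)$ be a metric space and $f:X\to X$ a homeomorphism; $\mathcal{C}^+=\{\epsilon:X\to\mathbb{R}^+ : \epsilon \text{ continuous}\}$. For $\delta\in\mathcal{C}^+$, a sequence $\{x_n\}_{n\in\mathbb{Z}}\subset X$ is a $\delta$-pseudo-orbit of $f$ if $d(f(x_n),x_{n+1})<\delta(f(x_n))$ for every $n\in\mathbb{Z}$. For $\epsilon\in\mathcal{C}^+$, the sequence $\{x_n\}$ is $\epsilon$-shadowed by an orbit if there is $y\in X$ with $d(f^n(y),x_n)<\epsilon(x_n)$ for every $n\in\mathbb{Z}$. The homeomorphism $f$ satisfies the topological shadowing property if for every $\epsilon\in\mathcal{C}^+$ there exists $\delta\in\mathcal{C}^+$ such that every $\delta$-pseudo-orbit is $\epsilon$-shadowed by an orbit. $\mathbb{R}^2$ carries the Euclidean metric. *)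

theory Defs
  imports "HOL-Analysis.Analysis"
begin

definition int_iter :: "('a \<Rightarrow> 'a) \<Rightarrow> int \<Rightarrow> 'a \<Rightarrow> 'a" where
  "int_iter f n = (if 0 \<le> n then f ^^ nat n else inv f ^^ nat (- n))"

definition pos_cont :: "('a::metric_space \<Rightarrow> real) \<Rightarrow> bool" where
  "pos_cont e \<longleftrightarrow> continuous_on UNIV e \<and> (\<forall>x. 0 < e x)"

definition pseudo_orbit :: "('a::metric_space \<Rightarrow> 'a) \<Rightarrow> ('a \<Rightarrow> real) \<Rightarrow> (int \<Rightarrow> 'a) \<Rightarrow> bool" where
  "pseudo_orbit f \<delta> xs \<longleftrightarrow> (\<forall>n. dist (f (xs n)) (xs (n + 1)) < \<delta> (f (xs n)))"

definition shadowed :: "('a::metric_space \<Rightarrow> 'a) \<Rightarrow> ('a \<Rightarrow> real) \<Rightarrow> (int \<Rightarrow> 'a) \<Rightarrow> bool" where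
  "shadowed f \<epsilon> xs \<longleftrightarrow> (\<exists>y. \<forall>n. dist (int_iter f n y) (xs n) < \<epsilon> (xs n))"

definition topological_shadowing :: "('a::metric_space \<Rightarrow> 'a) \<Rightarrow> bool" where
  "topological_shadowing f \<longleftrightarrow>
     (\<forall>\<epsilon>. pos_cont \<epsilon> \<longrightarrow>
        (\<exists>\<delta>. pos_cont \<delta> \<and> (\<forall>xs. pseudo_orbit f \<delta> xs \<longrightarrow> shadowed f \<epsilon> xs)))"

end

theory Submission
  imports Defs
begin

lemma conj_iter:
  assumes "\<And>y. h (h' y) = y" "\<And>x. h' (h x) = x"
  shows "((h \<circ> k \<circ> h') ^^ n) y = h ((k ^^ n) (h' y))"
  by (induction n) (auto simp: assms)

lemma f_iter: "((\<lambda>(x::real, y::real). (2 * x, y / 2)) ^^ n) (u, v) = (2 ^ n * u, v / 2 ^ n)"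
  by (induction n) auto

lemma f'_iter: "((\<lambda>(x::real, y::real). (x / 2, 2 * y)) ^^ n) (u, v) = (u / 2 ^ n, 2 ^ n * v)"
  by (induction n) auto

theorem mainTheorem4:
  fixes f g h h' :: "real \<times> real \<Rightarrow> real \<times> real"
  assumes "\<And>x y. f (x, y) = (2 * x, y / 2)"
    and "homeomorphism UNIV UNIV h h'"
    and "g = h \<circ> f \<circ> h'"
  shows "\<not> topological_shadowing g"
proof
  assume TS: "topological_shadowing g"
  have fdef: "f = (\<lambda>(x, y). (2 * x, y / 2))" using assms(1) by (auto simp: fun_eq_iff)
  define f' :: "real \<times> real \<Rightarrow> real \<times> real" where "f' = (\<lambda>(x, y). (x / 2, 2 * y))"
  have hh': "\<And>y. h (h' y) = y" and h'h: "\<And>x. h' (h x) = x"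
    and ch: "continuous_on UNIV h" and ch': "continuous_on UNIV h'"
    using assms(2) by (auto simp: homeomorphism_def)
  have invg: "inv g = h \<circ> f' \<circ> h'"
    by (rule inv_unique_comp) (auto simp: assms(3) fdef f'_def fun_eq_iff hh' h'h split: prod.splits, metis hh' mult.commute, metis hh' mult.commute)
  have iter_pos: "int_iter g (int n) y = h ((f ^^ n) (h' y))" for n y
    unfolding int_iter_def assms(3) using conj_iter[OF hh' h'h] by simp
  have iter_neg: "int_iter g (- int n) y = h ((f' ^^ n) (h' y))" for n y
    unfolding int_iter_def invg using conj_iter[OF hh' h'h, where k=f' and n=n and y=y]
    by (cases "n = 0") (simp_all add: hh')
  define U :: "(real \<times> real) set" where "U = {p. 1/2 < snd p} \<inter> {p. \<bar>fst p\<bar> * (snd p)^2 < 1}"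
  define S where "S = - U"
  define T :: "(real \<times> real) set" where "T = {p. fst p = 0} \<inter> {p. 1 \<le> snd p}"
  have "open U" unfolding U_def
    by (intro open_Int open_Collect_less continuous_intros)
  hence "closed S" unfolding S_def by auto
  have "closed T" unfolding T_def
    by (intro closed_Int closed_Collect_eq closed_Collect_le continuous_intros)
  have hS: "h ` S = h' -` S" and hT: "h ` T = h' -` T"
    using hh' h'h by (auto simp: image_iff) (metis)+
  have cS: "closed (h ` S)" unfolding hS
    using continuous_closed_vimage[OF \<open>closed S\<close>] ch' continuous_on_eq_continuous_at by blast
  have cT: "closed (h ` T)" unfolding hT
    using continuous_closed_vimage[OF \<open>closed T\<close>] ch' continuous_on_eq_continuous_at by blast
  have "(0,0) \<in> S" unfolding S_def U_def by auto
  hence neS: "h ` S \<noteq> {}" by auto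
  have "(0,1) \<in> T" unfolding T_def by auto
  hence neT: "h ` T \<noteq> {}" by auto
  have TU: "T \<subseteq> U" unfolding T_def U_def by auto
  define \<epsilon> where "\<epsilon> q = min 1 (infdist q (h ` S) + infdist q (h ` T))" for q
  have epos: "0 < \<epsilon> q" for q
  proof (rule ccontr)
    assume "\<not> 0 < \<epsilon> q"
    hence "infdist q (h ` S) = 0" "infdist q (h ` T) = 0"
      unfolding \<epsilon>_def using infdist_nonneg[of q "h ` S"] infdist_nonneg[of q "h ` T"] by auto
    hence "q \<in> h ` S" "q \<in> h ` T" using in_closed_iff_infdist_zero cS cT neS neT by blast+
    hence "h' q \<in> S" "h' q \<in> T" unfolding hS hT by auto
    thus False using TU unfolding S_def by auto
  qed
  have "pos_cont \<epsilon>" unfolding pos_cont_def \<epsilon>_def using epos[unfolded \<epsilon>_def]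
    by (auto intro!: continuous_intros continuous_on_infdist)
  with TS obtain \<delta> where dpos: "pos_cont \<delta>"
    and dsh: "\<And>xs. pseudo_orbit g \<delta> xs \<Longrightarrow> shadowed g \<epsilon> xs"
    unfolding topological_shadowing_def by blast
  have "0 < \<delta> (h (0, 1/2))" using dpos unfolding pos_cont_def by blast
  then obtain \<eta> where eta: "\<eta> > 0"
    and heta: "\<And>w. dist w (0, 1/2) < \<eta> \<Longrightarrow> dist (h w) (h (0, 1/2)) < \<delta> (h (0, 1/2))"
    using ch unfolding continuous_on_iff by blast
  define c where "c = \<eta> / 4"
  have c0: "c > 0" using eta by (simp add: c_def)
  define p :: "int \<Rightarrow> real \<times> real" where
    "p n = (if n \<le> 0 then (0, 2 ^ nat (- n)) else (c * 2 ^ nat n, 1 / 2 ^ nat n))" for n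
  define xs where "xs n = h (p n)" for n
  have gxs: "g (xs n) = h (f (p n))" for n by (simp add: xs_def assms(3) h'h)
  have "pseudo_orbit g \<delta> xs"
    unfolding pseudo_orbit_def
  proof
    fix n :: int
    have d0: "0 < \<delta> (g (xs n))" using dpos unfolding pos_cont_def by blast
    consider "n \<le> -1" | "n = 0" | "n \<ge> 1" by linarith
    then show "dist (g (xs n)) (xs (n + 1)) < \<delta> (g (xs n))"
    proof cases
      case 1
      hence "nat (- n) = Suc (nat (- (n + 1)))" by linarith
      hence "f (p n) = p (n + 1)" using 1 by (simp add: p_def fdef)
      thus ?thesis using d0 gxs xs_def by simp
    next
      case 2
      have "dist (2 * c, 1/2) (0, 1/2) < \<eta>" using c0 by (simp add: dist_Pair_Pair c_def)
      hence "dist (h (2 * c, 1/2)) (h (0, 1/2)) < \<delta> (h (0, 1/2))" by (rule heta)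
      moreover have "f (p n) = (0, 1/2)" "p (n + 1) = (2 * c, 1/2)" using 2 by (simp_all add: p_def fdef)
      ultimately show ?thesis using gxs xs_def by (simp add: dist_commute)
    next
      case 3
      hence "nat (n + 1) = Suc (nat n)" by linarith
      hence "f (p n) = p (n + 1)" using 3 by (simp add: p_def fdef)
      thus ?thesis using d0 gxs xs_def by simp
    qed
  qed
  then obtain y where sh: "\<And>n. dist (int_iter g n y) (xs n) < \<epsilon> (xs n)"
    using dsh unfolding shadowed_def by blast
  obtain u v where uv: "h' y = (u, v)" by fastforce
  have bk: "(u / 2 ^ m, 2 ^ m * v) \<in> U" for m
  proof (rule ccontr)
    assume nU: "(u / 2 ^ m, 2 ^ m * v) \<notin> U"
    have e1: "int_iter g (- int m) y = h (u / 2 ^ m, 2 ^ m * v)"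
      using iter_neg uv by (simp add: f'_def f'_iter)
    have e2: "xs (- int m) = h (0, 2 ^ m)" by (simp add: xs_def p_def)
    have "(0, (2::real) ^ m) \<in> T" unfolding T_def by auto
    hence "infdist (h (0, 2 ^ m)) (h ` T) = 0"
      using in_closed_iff_infdist_zero cT neT by blast
    moreover have "infdist (h (0, 2 ^ m)) (h ` S) \<le> dist (h (0, 2 ^ m)) (h (u / 2 ^ m, 2 ^ m * v))"
      using nU by (intro infdist_le) (auto simp: S_def)
    ultimately have "\<epsilon> (h (0, 2 ^ m)) \<le> dist (h (u / 2 ^ m, 2 ^ m * v)) (h (0, 2 ^ m))"
      unfolding \<epsilon>_def by (simp add: dist_commute)
    thus False using sh[of "- int m"] e1 e2 by simp
  qed
  have v: "v > 1/2" using bk[of 0] by (simp add: U_def)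
  have ub: "\<bar>u\<bar> * 2 ^ m < 4" for m
  proof -
    have "\<bar>u / 2 ^ m\<bar> * (2 ^ m * v)^2 < 1" using bk[of m] by (simp add: U_def)
    hence "\<bar>u\<bar> * 2 ^ m * v^2 < 1" by (simp add: power2_eq_square power_mult_distrib field_simps)
    moreover have "(1/2)^2 < v^2" using v by (intro power_strict_mono) auto
    hence "\<bar>u\<bar> * 2 ^ m * (1/4) \<le> \<bar>u\<bar> * 2 ^ m * v^2"
      by (intro mult_left_mono) (auto simp: power2_eq_square)
    ultimately show ?thesis by linarith
  qed
  have u0: "u = 0"
  proof (rule ccontr)
    assume "u \<noteq> 0"
    then obtain m where "4 / \<bar>u\<bar> < (2::real) ^ m" using real_arch_pow[of 2 "4 / \<bar>u\<bar>"] by auto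
    hence "4 < \<bar>u\<bar> * 2 ^ m" using \<open>u \<noteq> 0\<close> by (simp add: field_simps)
    thus False using ub[of m] by simp
  qed
  define K where "K = h ` cball 0 \<bar>v\<bar>"
  have "compact K" unfolding K_def
    by (intro compact_continuous_image continuous_on_subset[OF ch]) auto
  then obtain B where B: "\<And>k. k \<in> K \<Longrightarrow> norm k \<le> B"
    using compact_imp_bounded bounded_iff by metis
  define K2 where "K2 = h' ` cball 0 (B + 1)"
  have "compact K2" unfolding K2_def
    by (intro compact_continuous_image continuous_on_subset[OF ch']) auto
  then obtain C where C: "\<And>k. k \<in> K2 \<Longrightarrow> norm k \<le> C"
    using compact_imp_bounded bounded_iff by metis
  have fw: "c * 2 ^ n \<le> C" if "n \<ge> 1" for n :: nat
  proof -
    have e1: "int_iter g (int n) y = h (0, v / 2 ^ n)"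
      using iter_pos uv u0 by (simp add: fdef f_iter)
    have e2: "xs (int n) = h (p (int n))" by (simp add: xs_def)
    have "\<epsilon> (xs (int n)) \<le> 1" unfolding \<epsilon>_def by simp
    hence d1: "dist (h (0, v / 2 ^ n)) (h (p (int n))) < 1" using sh[of "int n"] e1 e2 by simp
    have "\<bar>v\<bar> \<le> \<bar>v\<bar> * 2 ^ n" using mult_left_mono[of 1 "2 ^ n" "\<bar>v\<bar>"] by simp
    hence "norm (0::real, v / 2 ^ n) \<le> \<bar>v\<bar>"
      by (simp add: norm_Pair divide_le_eq)
    hence "h (0, v / 2 ^ n) \<in> K" unfolding K_def by auto
    hence "norm (h (0, v / 2 ^ n)) \<le> B" by (rule B)
    hence "norm (h (p (int n))) \<le> B + 1" using d1 norm_triangle_ineq2[of "h (p (int n))" "h (0, v / 2 ^ n)"]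
      by (simp add: dist_norm norm_minus_commute)
    hence "h' (h (p (int n))) \<in> K2" unfolding K2_def by auto
    hence "p (int n) \<in> K2" by (simp only: h'h)
    hence "norm (p (int n)) \<le> C" by (rule C)
    moreover have "\<bar>fst (p (int n))\<bar> \<le> norm (p (int n))" using real_sqrt_sum_squares_ge1[of "\<bar>fst (p (int n))\<bar>" "norm (snd (p (int n)))"] by (simp add: norm_prod_def)
    moreover have "fst (p (int n)) = c * 2 ^ n" using that by (simp add: p_def)
    ultimately show ?thesis using c0 by simp
  qed
  obtain n where "C / c < (2::real) ^ n" using real_arch_pow[of 2 "C / c"] by auto
  hence "C < c * 2 ^ n" using c0 by (simp add: field_simps)
  moreover have "c * 2 ^ n \<le> c * 2 ^ Suc n" using c0 by simp
  ultimately have "C < c * 2 ^ Suc n" by linarith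
  thus False using fw[of "Suc n"] by simp
qed

end
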